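(* Let $d\le p$ be positive integers, $\mathcal{U}\subset\mathbb{R}^p$ a nonempty closed convex cone, $G$ a real $d\times p$ matrix with $\{Gu:u\in\mathcal{U}\}=\mathbb{R}^d$, and $\kappa\in\mathbb{R}^p$. Let $\mathcal{U}_1=\{u\in\mathcal{U}:|Gu|=1\}$ and $\mathcal{H}(q)=\sup_{u\in\mathcal{U}_1}\{-Gu\cdot q-\kappa\cdot u\}\in(-\infty,\infty]$ for $q\in\mathbb{R}^d$. The following are equivalent: (i) $\mathcal{H}(0)<\infty$; (ii) $\mathcal{H}(q)<\infty$ for some $q\in\mathbb{R}^d$; (iii) $\mathcal{H}(q)<\infty$ for all $q\in\mathbb{R}^d$; (iv) there exists $c_1\in(0,\infty)$ such that $(\kappa\cdot u)^-\le c_1|Gu|$ for all $u\in\mathcal{U}$; (v) the set $\{u\in\mathcal{U}:|Gu|\le\varepsilon,\ \kappa\cdot u\le-1\}$ is empty for all $\varepsilon>0$ sufficiently small.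
   Context: $|\cdot|$ is the Euclidean norm and $x^-=\max(-x,0)$. *)

theory Defs
  imports "HOL-Analysis.Analysis"
begin

definition negpart :: "real \<Rightarrow> real" where
  "negpart x = max (- x) 0"

definition U1set :: "(real^'p) set \<Rightarrow> real^'p^'d \<Rightarrow> (real^'p) set" where
  "U1set U G = {u \<in> U. norm (G *v u) = 1}"

definition Hfun :: "(real^'p) set \<Rightarrow> real^'p^'d \<Rightarrow> real^'p \<Rightarrow> real^'d \<Rightarrow> ereal" where
  "Hfun U G \<kappa> q = (SUP u \<in> U1set U G. ereal (- ((G *v u) \<bullet> q) - \<kappa> \<bullet> u))"

end

theory Submission
  imports Defs
begin

lemma sup_bdd:
  "(SUP u\<in>S. ereal (f u)) < \<infinity> \<longleftrightarrow> (\<exists>M. \<forall>u\<in>S. f u \<le> M)"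
proof
  assume "(SUP u\<in>S. ereal (f u)) < \<infinity>"
  then have "(SUP u\<in>S. ereal (f u)) \<noteq> \<infinity>" by (rule less_imp_neq)
  then obtain n where n: "(SUP u\<in>S. ereal (f u)) < ereal (real n)"
    unfolding less_PInf_Ex_of_nat by (elim exE)
  have "\<forall>u\<in>S. f u \<le> real n"
  proof
    fix u assume "u \<in> S"
    then have "ereal (f u) \<le> (SUP u\<in>S. ereal (f u))" by (rule SUP_upper)
    then have "ereal (f u) < ereal (real n)" using n by (rule order_le_less_trans)
    then show "f u \<le> real n" by simp
  qed
  then show "\<exists>M. \<forall>u\<in>S. f u \<le> M" by blast
next
  assume "\<exists>M. \<forall>u\<in>S. f u \<le> M"
  then obtain M where "\<forall>u\<in>S. f u \<le> M" by blast
  then have "(SUP u\<in>S. ereal (f u)) \<le> ereal M" by (intro SUP_least) simp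
  moreover have "ereal M < \<infinity>" by simp
  ultimately show "(SUP u\<in>S. ereal (f u)) < \<infinity>" by (rule order_le_less_trans)
qed

lemma H_iff:
  "Hfun U G \<kappa> q < \<infinity> \<longleftrightarrow> (\<exists>M. \<forall>u\<in>U1set U G. - \<kappa> \<bullet> u \<le> M)"
proof -
  have "Hfun U G \<kappa> q < \<infinity> \<longleftrightarrow> (\<exists>M. \<forall>u\<in>U1set U G. - ((G *v u) \<bullet> q) - \<kappa> \<bullet> u \<le> M)"
    unfolding Hfun_def by (rule sup_bdd[of "\<lambda>u. - ((G *v u) \<bullet> q) - \<kappa> \<bullet> u" "U1set U G"])
  also have "\<dots> \<longleftrightarrow> (\<exists>M. \<forall>u\<in>U1set U G. - \<kappa> \<bullet> u \<le> M)"
  proof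
    assume "\<exists>M. \<forall>u\<in>U1set U G. - ((G *v u) \<bullet> q) - \<kappa> \<bullet> u \<le> M"
    then obtain M where M: "\<forall>u\<in>U1set U G. - ((G *v u) \<bullet> q) - \<kappa> \<bullet> u \<le> M" by blast
    have "\<forall>u\<in>U1set U G. - \<kappa> \<bullet> u \<le> M + norm q"
    proof
      fix u assume u: "u \<in> U1set U G"
      then have "norm (G *v u) = 1" by (simp add: U1set_def)
      then have "\<bar>(G *v u) \<bullet> q\<bar> \<le> norm q" using Cauchy_Schwarz_ineq2[of "G *v u" q] by simp
      moreover have "- ((G *v u) \<bullet> q) - \<kappa> \<bullet> u \<le> M" using M u by blast
      ultimately show "- \<kappa> \<bullet> u \<le> M + norm q" unfolding inner_minus_left by linarith
    qed
    then show "\<exists>M. \<forall>u\<in>U1set U G. - \<kappa> \<bullet> u \<le> M" by blast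
  next
    assume "\<exists>M. \<forall>u\<in>U1set U G. - \<kappa> \<bullet> u \<le> M"
    then obtain M where M: "\<forall>u\<in>U1set U G. - \<kappa> \<bullet> u \<le> M" by blast
    have "\<forall>u\<in>U1set U G. - ((G *v u) \<bullet> q) - \<kappa> \<bullet> u \<le> M + norm q"
    proof
      fix u assume u: "u \<in> U1set U G"
      then have "norm (G *v u) = 1" by (simp add: U1set_def)
      then have "\<bar>(G *v u) \<bullet> q\<bar> \<le> norm q" using Cauchy_Schwarz_ineq2[of "G *v u" q] by simp
      moreover have "- \<kappa> \<bullet> u \<le> M" using M u by blast
      ultimately show "- ((G *v u) \<bullet> q) - \<kappa> \<bullet> u \<le> M + norm q" unfolding inner_minus_left by linarith
    qed
    then show "\<exists>M. \<forall>u\<in>U1set U G. - ((G *v u) \<bullet> q) - \<kappa> \<bullet> u \<le> M" by blast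
  qed
  finally show ?thesis .
qed

theorem lemmaA1:
  fixes U :: "(real^'p) set" and G :: "real^'p^'d" and \<kappa> :: "real^'p"
  assumes "CARD('d) \<le> CARD('p)"
    and "U \<noteq> {}" and "closed U" and "convex U" and "cone U"
    and "(\<lambda>u. G *v u) ` U = UNIV"
  shows "(Hfun U G \<kappa> 0 < \<infinity> \<longleftrightarrow> (\<exists>q. Hfun U G \<kappa> q < \<infinity>))
       \<and> (Hfun U G \<kappa> 0 < \<infinity> \<longleftrightarrow> (\<forall>q. Hfun U G \<kappa> q < \<infinity>))
       \<and> (Hfun U G \<kappa> 0 < \<infinity> \<longleftrightarrow>
            (\<exists>c1>0. \<forall>u\<in>U. negpart (\<kappa> \<bullet> u) \<le> c1 * norm (G *v u)))
       \<and> (Hfun U G \<kappa> 0 < \<infinity> \<longleftrightarrow>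
            (\<exists>\<epsilon>0>0. \<forall>\<epsilon>. 0 < \<epsilon> \<and> \<epsilon> \<le> \<epsilon>0 \<longrightarrow>
               {u \<in> U. norm (G *v u) \<le> \<epsilon> \<and> \<kappa> \<bullet> u \<le> -1} = {}))"
proof -
  let ?B = "\<exists>M. \<forall>u\<in>U1set U G. - \<kappa> \<bullet> u \<le> M"
  let ?C = "\<exists>c1>0. \<forall>u\<in>U. negpart (\<kappa> \<bullet> u) \<le> c1 * norm (G *v u)"
  let ?E = "\<exists>\<epsilon>0>0. \<forall>\<epsilon>. 0 < \<epsilon> \<and> \<epsilon> \<le> \<epsilon>0 \<longrightarrow>
               {u \<in> U. norm (G *v u) \<le> \<epsilon> \<and> \<kappa> \<bullet> u \<le> -1} = {}"
  have Hq: "\<And>q. Hfun U G \<kappa> q < \<infinity> \<longleftrightarrow> ?B" by (rule H_iff)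
  have scal: "\<And>c x. x \<in> U \<Longrightarrow> c \<ge> 0 \<Longrightarrow> c *\<^sub>R x \<in> U"
    using assms(5) unfolding cone_def by blast
  have add: "\<And>x y. x \<in> U \<Longrightarrow> y \<in> U \<Longrightarrow> x + y \<in> U"
  proof -
    fix x y assume xy: "x \<in> U" "y \<in> U"
    then have "(1/2) *\<^sub>R x + (1/2) *\<^sub>R y \<in> U" using assms(4) unfolding convex_def by auto
    then have "2 *\<^sub>R ((1/2) *\<^sub>R x + (1/2) *\<^sub>R y) \<in> U" by (rule scal) simp
    then show "x + y \<in> U" by (simp add: scaleR_add_right)
  qed
  have "axis (undefined::'d) 1 \<in> (\<lambda>u. G *v u) ` U" using assms(6) by simp
  then obtain w where w: "w \<in> U" "G *v w = axis (undefined::'d) 1" by (auto simp: image_iff)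
  have wU1: "w \<in> U1set U G" using w by (simp add: U1set_def norm_axis_1)
  have BC: "?B \<Longrightarrow> ?C"
  proof -
    assume ?B
    then obtain M where M: "\<forall>u\<in>U1set U G. - \<kappa> \<bullet> u \<le> M" by blast
    have ker: "\<kappa> \<bullet> u \<ge> 0" if u: "u \<in> U" "G *v u = 0" for u
    proof (rule ccontr)
      assume neg: "\<not> \<kappa> \<bullet> u \<ge> 0"
      define t where "t = (M + \<kappa> \<bullet> w + 1) / (- (\<kappa> \<bullet> u))"
      have tpos: "t \<ge> 0 \<or> t < 0" by auto
      define t' where "t' = max t 0"
      have "w + t' *\<^sub>R u \<in> U" using add[OF w(1) scal[OF u(1)]] by (simp add: t'_def)
      moreover have "G *v (w + t' *\<^sub>R u) = G *v w"
        using u(2) by (simp add: matrix_vector_right_distrib matrix_vector_mult_scaleR)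
      ultimately have "w + t' *\<^sub>R u \<in> U1set U G" using wU1 by (simp add: U1set_def)
      with M have "- \<kappa> \<bullet> (w + t' *\<^sub>R u) \<le> M" by blast
      then have "- \<kappa> \<bullet> w - t' * (\<kappa> \<bullet> u) \<le> M" by (simp add: inner_add_right)
      moreover have "t' * (\<kappa> \<bullet> u) \<le> t * (\<kappa> \<bullet> u)"
        using neg by (intro mult_right_mono_neg) (auto simp: t'_def)
      moreover have "t * (\<kappa> \<bullet> u) = - (M + \<kappa> \<bullet> w + 1)" using neg by (simp add: t_def field_simps)
      ultimately show False unfolding inner_minus_left by linarith
    qed
    have "\<forall>u\<in>U. negpart (\<kappa> \<bullet> u) \<le> max M 1 * norm (G *v u)"
    proof
      fix u assume u: "u \<in> U"
      show "negpart (\<kappa> \<bullet> u) \<le> max M 1 * norm (G *v u)"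
      proof (cases "G *v u = 0")
        case True
        then show ?thesis using ker[OF u True] by (simp add: negpart_def)
      next
        case False
        define n where "n = norm (G *v u)"
        have n: "n > 0" using False by (simp add: n_def)
        have "(1/n) *\<^sub>R u \<in> U" using scal[OF u] n by simp
        moreover have "norm (G *v ((1/n) *\<^sub>R u)) = 1"
          using n by (simp add: matrix_vector_mult_scaleR n_def)
        ultimately have "(1/n) *\<^sub>R u \<in> U1set U G" by (simp add: U1set_def)
        with M have "- \<kappa> \<bullet> ((1/n) *\<^sub>R u) \<le> M" by blast
        then have "- (\<kappa> \<bullet> u) / n \<le> M" by simp
        then have "- (\<kappa> \<bullet> u) \<le> M * n" using n by (simp add: field_simps)
        also have "\<dots> \<le> max M 1 * n" using n by (intro mult_right_mono) auto
        finally show ?thesis using n by (simp add: negpart_def n_def[symmetric])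
      qed
    qed
    then show ?C by (intro exI[of _ "max M 1"]) auto
  qed
  have CB: "?C \<Longrightarrow> ?B"
  proof -
    assume ?C
    then obtain c where c: "\<forall>u\<in>U. negpart (\<kappa> \<bullet> u) \<le> c * norm (G *v u)" by blast
    have "\<forall>u\<in>U1set U G. - \<kappa> \<bullet> u \<le> c"
    proof
      fix u assume "u \<in> U1set U G"
      then have "u \<in> U" "norm (G *v u) = 1" by (auto simp: U1set_def)
      with c have "negpart (\<kappa> \<bullet> u) \<le> c" by force
      then show "- \<kappa> \<bullet> u \<le> c" by (simp add: negpart_def)
    qed
    then show ?B by blast
  qed
  have CE: "?C \<Longrightarrow> ?E"
  proof -
    assume ?C
    then obtain c where c: "c > 0" "\<forall>u\<in>U. negpart (\<kappa> \<bullet> u) \<le> c * norm (G *v u)" by blast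
    have "\<forall>\<epsilon>. 0 < \<epsilon> \<and> \<epsilon> \<le> 1/(2*c) \<longrightarrow>
               {u \<in> U. norm (G *v u) \<le> \<epsilon> \<and> \<kappa> \<bullet> u \<le> -1} = {}"
    proof (intro allI impI)
      fix \<epsilon> :: real assume e: "0 < \<epsilon> \<and> \<epsilon> \<le> 1/(2*c)"
      show "{u \<in> U. norm (G *v u) \<le> \<epsilon> \<and> \<kappa> \<bullet> u \<le> -1} = {}"
      proof (rule ccontr)
        assume "{u \<in> U. norm (G *v u) \<le> \<epsilon> \<and> \<kappa> \<bullet> u \<le> -1} \<noteq> {}"
        then obtain u where u: "u \<in> U" "norm (G *v u) \<le> \<epsilon>" "\<kappa> \<bullet> u \<le> -1" by blast
        have "1 \<le> negpart (\<kappa> \<bullet> u)" using u(3) by (simp add: negpart_def)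
        also have "\<dots> \<le> c * norm (G *v u)" using c u by blast
        also have "\<dots> \<le> c * (1/(2*c))" using c(1) u(2) e by (intro mult_left_mono) auto
        also have "\<dots> = 1/2" using c(1) by simp
        finally show False by simp
      qed
    qed
    then show ?E using c(1) by (intro exI[of _ "1/(2*c)"]) auto
  qed
  have EC: "?E \<Longrightarrow> ?C"
  proof -
    assume ?E
    then obtain e where e: "e > 0" "{u \<in> U. norm (G *v u) \<le> e \<and> \<kappa> \<bullet> u \<le> -1} = {}" by blast
    have "\<forall>u\<in>U. negpart (\<kappa> \<bullet> u) \<le> (1/e) * norm (G *v u)"
    proof
      fix u assume u: "u \<in> U"
      show "negpart (\<kappa> \<bullet> u) \<le> (1/e) * norm (G *v u)"
      proof (cases "\<kappa> \<bullet> u < 0")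
        case False
        then show ?thesis using e by (simp add: negpart_def)
      next
        case True
        define s where "s = - (\<kappa> \<bullet> u)"
        have s: "s > 0" using True by (simp add: s_def)
        have v: "(1/s) *\<^sub>R u \<in> U" using scal[OF u] s by simp
        have k: "\<kappa> \<bullet> ((1/s) *\<^sub>R u) = -1" using s by (simp add: s_def)
        have "\<not> norm (G *v ((1/s) *\<^sub>R u)) \<le> e"
        proof
          assume h: "norm (G *v ((1/s) *\<^sub>R u)) \<le> e"
          have "(1/s) *\<^sub>R u \<in> {u \<in> U. norm (G *v u) \<le> e \<and> \<kappa> \<bullet> u \<le> -1}"
            using v h k by simp
          with e(2) show False by (metis empty_iff)
        qed
        then have "norm (G *v u) / s > e" using s by (simp add: matrix_vector_mult_scaleR)
        then have "norm (G *v u) > e * s" using s by (simp add: less_divide_eq)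
        then have "s \<le> (1/e) * norm (G *v u)" using e
          by (simp add: field_simps mult.commute)
        then show ?thesis using s by (simp add: negpart_def s_def)
      qed
    qed
    then show ?C using e by (intro exI[of _ "1/e"]) auto
  qed
  have B0: "Hfun U G \<kappa> 0 < \<infinity> \<longleftrightarrow> ?B" by (rule Hq)
  have e1: "(\<exists>q. Hfun U G \<kappa> q < \<infinity>) \<longleftrightarrow> ?B" using Hq by auto
  have e2: "(\<forall>q. Hfun U G \<kappa> q < \<infinity>) \<longleftrightarrow> ?B" using Hq by auto
  have e3: "?B \<longleftrightarrow> ?C" using BC CB by (rule iffI)
  have e4: "?C \<longleftrightarrow> ?E" using CE EC by (rule iffI)
  have e5: "?B \<longleftrightarrow> ?E" using e3 e4 by (rule trans)
  show ?thesis unfolding B0 e1 e2 by (intro conjI refl e3 e5)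
qed

end
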